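(* Let $S$ be a non-abelian finite simple group with universal covering group $\widetilde{S}$, and let $\chi$ be a non-principal irreducible character of $\widetilde{S}$. Then $S$ has a non-principal irreducible character of degree at most $\chi(1)^2-1$.
   Context: The universal covering group $\widetilde{S}$ of a non-abelian finite simple group $S$ is its Schur cover: the perfect central extension of $S$ by its Schur multiplier. *)

theory Defs
  imports "HOL-Algebra.Algebra" "Jordan_Normal_Form.Matrix"
begin

definition is_rep :: "('a, 'm) monoid_scheme \<Rightarrow> nat \<Rightarrow> ('a \<Rightarrow> complex mat) \<Rightarrow> bool" where
  "is_rep G n \<rho> \<longleftrightarrow>
     (\<forall>g\<in>carrier G. \<rho> g \<in> carrier_mat n n) \<and>
     (\<forall>g\<in>carrier G. \<forall>h\<in>carrier G. \<rho> (g \<otimes>\<^bsub>G\<^esub> h) = \<rho> g * \<rho> h) \<and>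
     \<rho> \<one>\<^bsub>G\<^esub> = 1\<^sub>m n"

definition invariant_subspace :: "('a, 'm) monoid_scheme \<Rightarrow> nat \<Rightarrow> ('a \<Rightarrow> complex mat) \<Rightarrow> complex vec set \<Rightarrow> bool" where
  "invariant_subspace G n \<rho> W \<longleftrightarrow>
     W \<subseteq> carrier_vec n \<and> 0\<^sub>v n \<in> W \<and>
     (\<forall>v\<in>W. \<forall>w\<in>W. v + w \<in> W) \<and>
     (\<forall>c. \<forall>v\<in>W. c \<cdot>\<^sub>v v \<in> W) \<and>
     (\<forall>g\<in>carrier G. \<forall>v\<in>W. \<rho> g *\<^sub>v v \<in> W)"

definition is_irr_rep :: "('a, 'm) monoid_scheme \<Rightarrow> nat \<Rightarrow> ('a \<Rightarrow> complex mat) \<Rightarrow> bool" where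
  "is_irr_rep G n \<rho> \<longleftrightarrow> is_rep G n \<rho> \<and> n > 0 \<and>
     (\<forall>W. invariant_subspace G n \<rho> W \<longrightarrow> W = {0\<^sub>v n} \<or> W = carrier_vec n)"

definition rep_character :: "nat \<Rightarrow> ('a \<Rightarrow> complex mat) \<Rightarrow> 'a \<Rightarrow> complex" where
  "rep_character n \<rho> g = (\<Sum>i<n. \<rho> g $$ (i, i))"

definition principal_character :: "('a, 'm) monoid_scheme \<Rightarrow> nat \<Rightarrow> ('a \<Rightarrow> complex mat) \<Rightarrow> bool" where
  "principal_character G n \<rho> \<longleftrightarrow> (\<forall>g\<in>carrier G. rep_character n \<rho> g = 1)"

definition perfect_group :: "('a, 'm) monoid_scheme \<Rightarrow> bool" where
  "perfect_group G \<longleftrightarrow> derived G (carrier G) = carrier G"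

definition group_center :: "('a, 'm) monoid_scheme \<Rightarrow> 'a set" where
  "group_center G = {z \<in> carrier G. \<forall>g\<in>carrier G. z \<otimes>\<^bsub>G\<^esub> g = g \<otimes>\<^bsub>G\<^esub> z}"

definition central_extension :: "('b, 'n) monoid_scheme \<Rightarrow> ('a, 'm) monoid_scheme \<Rightarrow> ('b \<Rightarrow> 'a) \<Rightarrow> bool" where
  "central_extension E G \<pi> \<longleftrightarrow> group E \<and> group G \<and> \<pi> \<in> hom E G \<and>
     \<pi> ` carrier E = carrier G \<and> kernel E G \<pi> \<subseteq> group_center E"

(* Schur cover (universal covering group) of a finite perfect group S:
   a perfect central extension of S of maximal order among all perfect central
   extensions (every such extension is a quotient of the Schur cover).
   Competing extensions range over groups carried by nat, which covers all
   finite groups up to isomorphism. *)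
definition schur_cover :: "('b, 'n) monoid_scheme \<Rightarrow> ('a, 'm) monoid_scheme \<Rightarrow> ('b \<Rightarrow> 'a) \<Rightarrow> bool" where
  "schur_cover Sh S \<pi> \<longleftrightarrow> central_extension Sh S \<pi> \<and> perfect_group Sh \<and> finite (carrier Sh) \<and>
     (\<forall>(E :: nat monoid) (\<psi> :: nat \<Rightarrow> 'a).
        central_extension E S \<psi> \<and> perfect_group E \<and> finite (carrier E)
        \<longrightarrow> card (carrier E) \<le> card (carrier Sh))"

end

theory Submission
  imports Defs "Jordan_Normal_Form.Gram_Schmidt" "Jordan_Normal_Form.Spectral_Radius"
begin

lemma mat_eq_by_vec:
  fixes A C :: "complex mat"
  assumes A: "A \<in> carrier_mat m k" and C: "C \<in> carrier_mat m k"
    and eq: "\<And>x. x \<in> carrier_vec k \<Longrightarrow> A *\<^sub>v x = C *\<^sub>v x"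
  shows "A = C"
proof (rule eq_matI)
  fix i j assume i: "i < dim_row C" and j: "j < dim_col C"
  have "(A *\<^sub>v unit_vec k j) $ i = (C *\<^sub>v unit_vec k j) $ i" using eq[of "unit_vec k j"] by simp
  then show "A $$ (i, j) = C $$ (i, j)" using A C i j by simp
qed (use A C in auto)

lemma restrict_rep:
  fixes S :: "('a,'m) monoid_scheme" and \<sigma> :: "'a \<Rightarrow> complex mat"
  assumes rep: "is_rep S m \<sigma>" and inv: "invariant_subspace S m \<sigma> W"
    and ne0: "W \<noteq> {0\<^sub>v m}" and neall: "W \<noteq> carrier_vec m"
  shows "\<exists>k \<tau> B. 0 < k \<and> k < m \<and> is_rep S k \<tau> \<and> B \<in> carrier_mat m k \<and>
     (\<forall>v\<in>carrier_vec k. B *\<^sub>v v \<in> W \<and> (B *\<^sub>v v = 0\<^sub>v m \<longrightarrow> v = 0\<^sub>v k)) \<and>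
     (\<forall>g\<in>carrier S. \<sigma> g * B = B * \<tau> g)"
proof -
  interpret V: cof_vec_space m "TYPE(complex)" .
  have Wsub: "submodule class_ring W (module_vec TYPE(complex) m)"
    using inv vec_module[where ?'a=complex and n=m] unfolding submodule_def invariant_subspace_def
    by (auto simp: module_vec_simps class_ring_simps)
  have WC: "W \<subseteq> carrier_vec m" using inv unfolding invariant_subspace_def by auto
  let ?P = "\<lambda>A. A \<subseteq> W \<and> V.lin_indpt A"
  have bnd: "finite A \<and> card A \<le> m" if "?P A" for A
    using V.li_le_dim[OF V.fin_dim, of A] that WC V.dim_is_n by auto
  have P0: "?P {}" by (auto simp: V.lin_dep_def)
  obtain A where finA: "finite A" and maxA: "maximal A ?P"
    using maximal_exists[of ?P m "{}", OF bnd P0] by blast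
  have AW: "A \<subseteq> W" and liA: "V.lin_indpt A" using maxA unfolding maximal_def by auto
  have AC: "A \<subseteq> carrier_vec m" using AW WC by auto
  have spanA: "V.span A = W"
  proof
    show "V.span A \<subseteq> W" using V.span_is_subset[OF AW Wsub] .
    show "W \<subseteq> V.span A"
    proof
      fix w assume w: "w \<in> W"
      show "w \<in> V.span A"
      proof (rule ccontr)
        assume nw: "w \<notin> V.span A"
        have "w \<notin> A" using nw V.in_own_span[of A] AC by auto
        then have "V.lin_indpt (A \<union> {w})" using V.lin_dep_iff_in_span[of A w] AC liA w WC nw by auto
        then have "A \<union> {w} = A" using maxA w AW unfolding maximal_def by auto
        then show False using \<open>w \<notin> A\<close> by auto
      qed
    qed
  qed
  define k where "k = card A"
  have km: "k < m"
  proof -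
    have "k \<le> m" using bnd[of A] AW liA k_def by auto
    moreover have "k \<noteq> m"
    proof
      assume "k = m"
      then have "V.basis A" using V.dim_li_is_basis[OF V.fin_dim finA _ liA] AC V.dim_is_n k_def by auto
      then have "V.span A = carrier_vec m" unfolding V.basis_def by auto
      then show False using spanA neall by auto
    qed
    ultimately show ?thesis by auto
  qed
  have k0: "0 < k"
  proof (rule ccontr)
    assume "\<not> 0 < k"
    then have "A = {}" using finA k_def by auto
    then have "V.span A = {0\<^sub>v m}" using V.span_empty by simp
    then show False using spanA ne0 by auto
  qed
  obtain bs where bs: "set bs = A" "distinct bs" using finite_distinct_list[OF finA] by blast
  define us where "us = gram_schmidt m bs"
  have bsC: "set bs \<subseteq> carrier_vec m" using bs AC by auto
  have us_span: "V.span (set us) = W"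
    using V.gram_schmidt_result(1)[OF bsC bs(2) _ us_def] liA bs spanA by auto
  have us_orth: "corthogonal us"
    using V.gram_schmidt_result(2)[OF bsC bs(2) _ us_def] liA bs by auto
  have usC: "set us \<subseteq> carrier_vec m"
    using V.gram_schmidt_result(3)[OF bsC bs(2) _ us_def] liA bs by auto
  have us_len: "length us = k"
    using V.gram_schmidt_result(4)[OF bsC bs(2) _ us_def] liA bs k_def distinct_card[OF bs(2)] by auto
  have dimus: "\<forall>w\<in>set us. dim_vec w = m" using usC by auto
  define B where "B = mat_of_cols m us"
  define L where "L = mat k m (\<lambda>(i,l). conjugate (us ! i $ l) / (us ! i \<bullet>c us ! i))"
  have B: "B \<in> carrier_mat m k" unfolding B_def using us_len by auto
  have L: "L \<in> carrier_mat k m" unfolding L_def by auto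
  have LB: "L * B = 1\<^sub>m k"
  proof (rule eq_matI)
    fix i j assume i: "i < dim_row (1\<^sub>m k)" and j: "j < dim_col (1\<^sub>m k)"
    have usi: "us ! i \<in> carrier_vec m" and usj: "us ! j \<in> carrier_vec m"
      using usC i j us_len by auto
    have ci: "us ! i \<bullet>c us ! i \<noteq> 0" using us_orth i us_len by (auto simp: corthogonal_def)
    have colj: "col B j = us ! j" unfolding B_def using j us_len usj by (simp add: col_mat_of_cols)
    have "(L * B) $$ (i, j) = row L i \<bullet> col B j" using i j L B by simp
    also have "\<dots> = (\<Sum>l<m. conjugate (us ! i $ l) / (us ! i \<bullet>c us ! i) * us ! j $ l)"
      using i usj colj unfolding L_def scalar_prod_def by (auto intro!: sum.cong simp: lessThan_atLeast0)
    also have "\<dots> = (us ! j \<bullet>c us ! i) / (us ! i \<bullet>c us ! i)"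
      using usi usj unfolding scalar_prod_def
      by (auto simp: sum_divide_distrib lessThan_atLeast0 mult.commute intro!: sum.cong)
    also have "\<dots> = 1\<^sub>m k $$ (i, j)"
      using i j ci us_orth us_len by (auto simp: corthogonal_def)
    finally show "(L * B) $$ (i, j) = 1\<^sub>m k $$ (i, j)" .
  qed (use L B in auto)
  have BinW: "B *\<^sub>v x \<in> W" if x: "x \<in> carrier_vec k" for x
  proof -
    have "vec (length us) (\<lambda>i. x $ i) = x" using x us_len by (auto intro!: eq_vecI)
    then have "B *\<^sub>v x = B *\<^sub>v vec (length us) (\<lambda>i. x $ i)" by simp
    also have "\<dots> = V.lincomb_list (\<lambda>i. x $ i) us"
      unfolding B_def using V.lincomb_list_as_mat_mult[OF dimus] by simp
    also have "\<dots> \<in> V.span_list us" by (rule V.in_span_listI) auto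
    finally show ?thesis using V.span_list_as_span[OF usC] us_span by auto
  qed
  have Wsurj: "\<exists>x\<in>carrier_vec k. w = B *\<^sub>v x" if w: "w \<in> W" for w
  proof -
    have "w \<in> V.span_list us" using V.span_list_as_span[OF usC] us_span w by auto
    then obtain c where "w = V.lincomb_list c us" unfolding V.span_list_def by auto
    also have "\<dots> = B *\<^sub>v vec k c"
      unfolding B_def using V.lincomb_list_as_mat_mult[OF dimus] us_len by simp
    finally show ?thesis by auto
  qed
  define \<tau> where "\<tau> g = L * \<sigma> g * B" for g
  have sg: "\<sigma> g \<in> carrier_mat m m" if "g \<in> carrier S" for g
    using rep that unfolding is_rep_def by auto
  have tg: "\<tau> g \<in> carrier_mat k k" if "g \<in> carrier S" for g
    unfolding \<tau>_def using sg[OF that] L B by auto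
  have inter: "\<sigma> g * B = B * \<tau> g" if g: "g \<in> carrier S" for g
  proof (rule mat_eq_by_vec)
    show "\<sigma> g * B \<in> carrier_mat m k" using sg[OF g] B by auto
    show "B * \<tau> g \<in> carrier_mat m k" using tg[OF g] B by auto
    fix x :: "complex vec" assume x: "x \<in> carrier_vec k"
    have "\<sigma> g *\<^sub>v (B *\<^sub>v x) \<in> W"
      using inv g BinW[OF x] unfolding invariant_subspace_def by auto
    then obtain y where y: "y \<in> carrier_vec k" and yy: "\<sigma> g *\<^sub>v (B *\<^sub>v x) = B *\<^sub>v y"
      using Wsurj by blast
    have Xc: "L * \<sigma> g \<in> carrier_mat k m" using L sg[OF g] by auto
    have Bx: "B *\<^sub>v x \<in> carrier_vec m" using B x by auto
    have tx: "\<tau> g *\<^sub>v x = L *\<^sub>v (\<sigma> g *\<^sub>v (B *\<^sub>v x))"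
      unfolding \<tau>_def using assoc_mult_mat_vec[OF Xc B x] assoc_mult_mat_vec[OF L sg[OF g] Bx] by simp
    have "(B * \<tau> g) *\<^sub>v x = B *\<^sub>v (\<tau> g *\<^sub>v x)" using assoc_mult_mat_vec[OF B tg[OF g] x] .
    also have "\<dots> = B *\<^sub>v (L *\<^sub>v (B *\<^sub>v y))" using tx yy by simp
    also have "\<dots> = B *\<^sub>v ((L * B) *\<^sub>v y)" using assoc_mult_mat_vec[OF L B y] by simp
    also have "\<dots> = B *\<^sub>v y" using LB y by simp
    also have "\<dots> = (\<sigma> g * B) *\<^sub>v x" using yy assoc_mult_mat_vec[OF sg[OF g] B x] by simp
    finally show "(\<sigma> g * B) *\<^sub>v x = (B * \<tau> g) *\<^sub>v x" by simp
  qed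
  have "is_rep S k \<tau>"
    unfolding is_rep_def
  proof (intro conjI ballI)
    show "\<tau> g \<in> carrier_mat k k" if "g \<in> carrier S" for g using tg that by auto
    fix g h assume g: "g \<in> carrier S" and h: "h \<in> carrier S"
    have "\<tau> (g \<otimes>\<^bsub>S\<^esub> h) = L * (\<sigma> g * \<sigma> h) * B"
      unfolding \<tau>_def using rep g h unfolding is_rep_def by auto
    also have "\<dots> = L * \<sigma> g * (\<sigma> h * B)"
    proof -
      have m1: "\<sigma> g * \<sigma> h \<in> carrier_mat m m" using sg[OF g] sg[OF h] by auto
      have m2: "\<sigma> h * B \<in> carrier_mat m k" using sg[OF h] B by auto
      show ?thesis by (simp only: assoc_mult_mat[OF L m1 B] assoc_mult_mat[OF sg[OF g] sg[OF h] B]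
            assoc_mult_mat[OF L sg[OF g] m2])
    qed
    also have "\<dots> = L * \<sigma> g * (B * \<tau> h)" using inter[OF h] by simp
    also have "\<dots> = (L * \<sigma> g * B) * \<tau> h"
    proof -
      have Xc: "L * \<sigma> g \<in> carrier_mat k m" using L sg[OF g] by auto
      show ?thesis using assoc_mult_mat[OF Xc B tg[OF h]] by simp
    qed
    also have "\<dots> = \<tau> g * \<tau> h" by (simp only: \<tau>_def[of g])
    finally show "\<tau> (g \<otimes>\<^bsub>S\<^esub> h) = \<tau> g * \<tau> h" .
  next
    show "\<tau> \<one>\<^bsub>S\<^esub> = 1\<^sub>m k" unfolding \<tau>_def using rep LB L B unfolding is_rep_def by auto
  qed
  moreover have "B *\<^sub>v v \<in> W \<and> (B *\<^sub>v v = 0\<^sub>v m \<longrightarrow> v = 0\<^sub>v k)" if v: "v \<in> carrier_vec k" for v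
  proof
    show "B *\<^sub>v v \<in> W" using BinW[OF v] .
    show "B *\<^sub>v v = 0\<^sub>v m \<longrightarrow> v = 0\<^sub>v k"
    proof
      assume "B *\<^sub>v v = 0\<^sub>v m"
      then have "L *\<^sub>v (B *\<^sub>v v) = 0\<^sub>v k" using L by auto
      then show "v = 0\<^sub>v k" using LB L B v by (simp add: assoc_mult_mat_vec[symmetric])
    qed
  qed
  ultimately show ?thesis using k0 km B inter by blast
qed

lemma schur_scalar:
  fixes G :: "('a,'m) monoid_scheme" and M :: "complex mat"
  assumes irr: "is_irr_rep G n \<rho>" and M: "M \<in> carrier_mat n n"
    and comm: "\<And>g. g \<in> carrier G \<Longrightarrow> M * \<rho> g = \<rho> g * M"
  shows "\<exists>c. M = c \<cdot>\<^sub>m 1\<^sub>m n"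
proof -
  have n0: "n > 0" and rep: "is_rep G n \<rho>" using irr unfolding is_irr_rep_def by auto
  have rg: "\<rho> g \<in> carrier_mat n n" if "g \<in> carrier G" for g
    using rep that unfolding is_rep_def by auto
  obtain lam where "lam \<in> spectrum M" using spectrum_non_empty[OF M n0] by blast
  then obtain v where ev: "eigenvector M v lam" unfolding spectrum_def eigenvalue_def by auto
  have v: "v \<in> carrier_vec n" "v \<noteq> 0\<^sub>v n" "M *\<^sub>v v = lam \<cdot>\<^sub>v v"
    using ev M unfolding eigenvector_def by auto
  define W where "W = {w \<in> carrier_vec n. M *\<^sub>v w = lam \<cdot>\<^sub>v w}"
  have "invariant_subspace G n \<rho> W"
    unfolding invariant_subspace_def
  proof (intro conjI ballI allI)
    show "W \<subseteq> carrier_vec n" unfolding W_def by auto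
    show "0\<^sub>v n \<in> W" unfolding W_def using M by auto
    fix a b assume a: "a \<in> W" and b: "b \<in> W"
    show "a + b \<in> W" using a b M unfolding W_def
      by (auto simp: mult_add_distrib_mat_vec smult_add_distrib_vec)
  next
    fix c a assume a: "a \<in> W"
    show "c \<cdot>\<^sub>v a \<in> W" using a M unfolding W_def
      by (auto simp: mult_mat_vec smult_smult_assoc mult.commute)
  next
    fix g a assume g: "g \<in> carrier G" and a: "a \<in> W"
    have "M *\<^sub>v (\<rho> g *\<^sub>v a) = (M * \<rho> g) *\<^sub>v a" using M rg[OF g] a unfolding W_def by auto
    also have "\<dots> = (\<rho> g * M) *\<^sub>v a" using comm[OF g] by simp
    also have "\<dots> = \<rho> g *\<^sub>v (lam \<cdot>\<^sub>v a)" using M rg[OF g] a unfolding W_def by auto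
    also have "\<dots> = lam \<cdot>\<^sub>v (\<rho> g *\<^sub>v a)" using rg[OF g] a unfolding W_def by (auto simp: mult_mat_vec)
    finally show "\<rho> g *\<^sub>v a \<in> W" using rg[OF g] a unfolding W_def by auto
  qed
  then have "W = {0\<^sub>v n} \<or> W = carrier_vec n" using irr unfolding is_irr_rep_def by auto
  moreover have "v \<in> W" using v unfolding W_def by auto
  ultimately have WC: "W = carrier_vec n" using v by auto
  have "M = lam \<cdot>\<^sub>m 1\<^sub>m n"
  proof (rule mat_eq_by_vec[OF M])
    show "lam \<cdot>\<^sub>m 1\<^sub>m n \<in> carrier_mat n n" by auto
    fix x :: "complex vec" assume "x \<in> carrier_vec n"
    then have "M *\<^sub>v x = lam \<cdot>\<^sub>v x" using WC unfolding W_def by auto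
    then show "M *\<^sub>v x = (lam \<cdot>\<^sub>m 1\<^sub>m n) *\<^sub>v x" using \<open>x \<in> carrier_vec n\<close> by auto
  qed
  then show ?thesis by blast
qed

lemma deg1_trivial:
  fixes G (structure)
  assumes grp: "group G" and perf: "perfect_group G" and rep: "is_rep G 1 \<rho>"
    and g: "g \<in> carrier G"
  shows "\<rho> g = 1\<^sub>m 1"
proof -
  interpret group G by (rule grp)
  define f where "f h = \<rho> h $$ (0,0)" for h
  have rg: "\<rho> h \<in> carrier_mat 1 1" if "h \<in> carrier G" for h
    using rep that unfolding is_rep_def by auto
  have fm: "f (a \<otimes> b) = f a * f b" if "a \<in> carrier G" "b \<in> carrier G" for a b
  proof -
    have "\<rho> (a \<otimes> b) = \<rho> a * \<rho> b" using rep that unfolding is_rep_def by auto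
    then show ?thesis unfolding f_def using rg[OF that(1)] rg[OF that(2)]
      by (simp add: scalar_prod_def row_def col_def)
  qed
  have f1: "f \<one> = 1" using rep unfolding is_rep_def f_def by auto
  have finv: "f (inv a) * f a = 1" if "a \<in> carrier G" for a
    using fm[of "inv a" a] that f1 by auto
  have eq1: "\<rho> h = 1\<^sub>m 1 \<longleftrightarrow> f h = 1" if "h \<in> carrier G" for h
  proof
    assume "f h = 1"
    then show "\<rho> h = 1\<^sub>m 1" using rg[OF that] unfolding f_def by (auto intro!: eq_matI)
  qed (auto simp: f_def)
  define H where "H = {h \<in> carrier G. f h = 1}"
  have "subgroup H G"
  proof (rule subgroupI)
    show "H \<subseteq> carrier G" unfolding H_def by auto
    show "H \<noteq> {}" using f1 unfolding H_def by auto
    fix a assume "a \<in> H"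
    then have a: "a \<in> carrier G" "f a = 1" unfolding H_def by auto
    then show "inv a \<in> H" using finv[OF a(1)] unfolding H_def by auto
  next
    fix a b assume "a \<in> H" "b \<in> H" then show "a \<otimes> b \<in> H" using fm unfolding H_def by auto
  qed
  moreover have "derived_set G (carrier G) \<subseteq> H"
  proof
    fix x assume "x \<in> derived_set G (carrier G)"
    then obtain a b where ab: "a \<in> carrier G" "b \<in> carrier G"
      and x: "x = a \<otimes> b \<otimes> inv a \<otimes> inv b" by auto
    have "f x = (f (inv a) * f a) * (f (inv b) * f b)" using ab x fm by (simp add: ac_simps)
    then show "x \<in> H" using finv ab x unfolding H_def by auto
  qed
  ultimately have "derived G (carrier G) \<subseteq> H" unfolding derived_def
    using generate_subgroup_incl by auto
  then have "g \<in> H" using perf g unfolding perfect_group_def by auto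
  then show ?thesis using eq1 g unfolding H_def by auto
qed

lemma sum_split_idx: fixes m n :: nat shows "(\<Sum>q<m*n. g q) = (\<Sum>k<m. \<Sum>l<n. g (k*n+l))"
proof (induction m)
  case 0 then show ?case by simp
next
  case (Suc m)
  have "(\<Sum>q<Suc m*n. g q) = (\<Sum>q\<in>{0..<m*n+n}. g q)"
    by (simp add: lessThan_atLeast0 add.commute)
  also have "\<dots> = (\<Sum>q\<in>{0..<m*n}. g q) + (\<Sum>q\<in>{m*n..<m*n+n}. g q)"
    by (rule sum.atLeastLessThan_concat[symmetric]) auto
  also have "(\<Sum>q\<in>{m*n..<m*n+n}. g q) = (\<Sum>l\<in>{0..<n}. g (m*n+l))"
    using sum.shift_bounds_nat_ivl[of g 0 "m*n" n] by (simp add: add.commute)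
  finally show ?case using Suc by (simp add: lessThan_atLeast0)
qed

lemma idx_lt: "i < n \<Longrightarrow> j < n \<Longrightarrow> i*n+j < (n*n::nat)"
proof -
  assume "i < n" "j < n"
  then have "i*n+j < i*n+n" by simp
  also have "\<dots> = Suc i * n" by simp
  also have "\<dots> \<le> n*n" using \<open>i<n\<close> by (intro mult_le_mono1) simp
  finally show ?thesis .
qed

lemma sum_split_idx2: "(\<Sum>q<n*n. f (q div n) (q mod n)) = (\<Sum>k<n. \<Sum>l<(n::nat). f k l)"
  unfolding sum_split_idx by (intro sum.cong refl) auto

definition vm :: "nat \<Rightarrow> complex vec \<Rightarrow> complex mat" where
  "vm n v = mat n n (\<lambda>(i,j). v $ (i*n+j))"
definition mv :: "nat \<Rightarrow> complex mat \<Rightarrow> complex vec" where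
  "mv n M = vec (n*n) (\<lambda>p. M $$ (p div n, p mod n))"
definition KK :: "nat \<Rightarrow> complex mat \<Rightarrow> complex mat \<Rightarrow> complex mat" where
  "KK n A A' = mat (n*n) (n*n) (\<lambda>(p,q). A $$ (p div n, q div n) * A' $$ (q mod n, p mod n))"

lemma divmod_lt: "p < n*n \<Longrightarrow> p div n < n \<and> p mod (n::nat) < n"
  by (metis less_mult_imp_div_less mod_less_divisor mult_0_right neq0_conv not_less0)

lemma dim_vm[simp]: "dim_row (vm n v) = n" "dim_col (vm n v) = n" unfolding vm_def by auto
lemma dim_mv[simp]: "dim_vec (mv n M) = n * n" unfolding mv_def by auto
lemma vm_carrier[simp]: "vm n v \<in> carrier_mat n n" unfolding vm_def by auto
lemma mv_carrier[simp]: "mv n M \<in> carrier_vec (n*n)" unfolding mv_def by auto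
lemma KK_carrier[simp]: "KK n A A' \<in> carrier_mat (n*n) (n*n)" unfolding KK_def by auto

lemma vm_mv: "M \<in> carrier_mat n n \<Longrightarrow> vm n (mv n M) = M"
  unfolding vm_def mv_def by (auto intro!: eq_matI simp: idx_lt)

lemma mv_vm: "v \<in> carrier_vec (n*n) \<Longrightarrow> mv n (vm n v) = v"
  unfolding vm_def mv_def by (auto intro!: eq_vecI simp: divmod_lt)

lemma KK_act:
  assumes A: "A \<in> carrier_mat n n" and A': "A' \<in> carrier_mat n n" and v: "v \<in> carrier_vec (n*n)"
  shows "KK n A A' *\<^sub>v v = mv n (A * vm n v * A')"
proof (rule eq_vecI)
  show "dim_vec (KK n A A' *\<^sub>v v) = dim_vec (mv n (A * vm n v * A'))" by (simp add: mv_def KK_def)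
  fix p assume "p < dim_vec (mv n (A * vm n v * A'))"
  then have p: "p < n*n" by (simp add: mv_def)
  define i j where "i = p div n" and "j = p mod n"
  have ij: "i < n" "j < n" using divmod_lt[OF p] i_def j_def by auto
  have "(KK n A A' *\<^sub>v v) $ p = (\<Sum>q<n*n. A $$ (i, q div n) * A' $$ (q mod n, j) * v $ (q))"
    using p v unfolding KK_def i_def j_def
    by (auto simp: scalar_prod_def lessThan_atLeast0 intro!: sum.cong)
  also have "\<dots> = (\<Sum>q<n*n. A $$ (i, q div n) * A' $$ (q mod n, j) * v $ ((q div n)*n + q mod n))"
    by simp
  also have "\<dots> = (\<Sum>k<n. \<Sum>l<n. A $$ (i, k) * A' $$ (l, j) * v $ (k*n+l))"
    by (rule sum_split_idx2)
  also have "\<dots> = (\<Sum>l<n. (\<Sum>k<n. A $$ (i, k) * v $ (k*n+l)) * A' $$ (l, j))"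
  proof -
    have "(\<Sum>k<n. \<Sum>l<n. A $$ (i, k) * A' $$ (l, j) * v $ (k*n+l)) = (\<Sum>l<n. \<Sum>k<n. A $$ (i, k) * A' $$ (l, j) * v $ (k*n+l))"
      by (rule sum.swap)
    also have "\<dots> = (\<Sum>l<n. (\<Sum>k<n. A $$ (i, k) * v $ (k*n+l)) * A' $$ (l, j))"
      unfolding sum_distrib_right by (intro sum.cong refl) (simp add: algebra_simps)
    finally show ?thesis .
  qed
  also have "\<dots> = (A * vm n v * A') $$ (i, j)"
    using A A' ij unfolding vm_def
    by (auto simp: scalar_prod_def lessThan_atLeast0 idx_lt intro!: sum.cong)
  also have "\<dots> = mv n (A * vm n v * A') $ p"
    unfolding mv_def i_def j_def using p by simp
  finally show "(KK n A A' *\<^sub>v v) $ p = mv n (A * vm n v * A') $ p" .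
qed


definition tr :: "nat \<Rightarrow> complex mat \<Rightarrow> complex" where
  "tr n M = (\<Sum>i<n. M $$ (i,i))"

lemma tr_comm:
  assumes A: "A \<in> carrier_mat n n" and B: "B \<in> carrier_mat n n"
  shows "tr n (A * B) = tr n (B * A)"
proof -
  have "tr n (A * B) = (\<Sum>i<n. \<Sum>j<n. A $$ (i,j) * B $$ (j,i))"
    unfolding tr_def using A B by (auto simp: scalar_prod_def lessThan_atLeast0 intro!: sum.cong)
  also have "\<dots> = (\<Sum>j<n. \<Sum>i<n. A $$ (i,j) * B $$ (j,i))" by (rule sum.swap)
  also have "\<dots> = tr n (B * A)"
    unfolding tr_def using A B by (auto simp: scalar_prod_def lessThan_atLeast0 mult.commute intro!: sum.cong)
  finally show ?thesis .
qed

lemma tr_vm: "tr n (vm n v) = (\<Sum>i<n. v $ (i*n+i))"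
  unfolding tr_def vm_def by (auto intro!: sum.cong)

lemma tr_mv: "M \<in> carrier_mat n n \<Longrightarrow> (\<Sum>i<n. mv n M $ (i*n+i)) = tr n M"
  unfolding tr_def mv_def by (auto simp: idx_lt intro!: sum.cong)


theorem proposition3p1:
  fixes S :: "'a monoid" and Sh :: "'b monoid" and \<pi> :: "'b \<Rightarrow> 'a"
    and n :: nat and \<rho> :: "'b \<Rightarrow> complex mat"
  assumes "simple_group S" and "\<not> comm_group S"
    and "schur_cover Sh S \<pi>"
    and "is_irr_rep Sh n \<rho>" and "\<not> principal_character Sh n \<rho>"
  shows "\<exists>m (\<sigma> :: 'a \<Rightarrow> complex mat). is_irr_rep S m \<sigma> \<and> \<not> principal_character S m \<sigma> \<and>
           m \<le> n ^ 2 - 1"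
proof -
  have ce: "central_extension Sh S \<pi>" and perf: "perfect_group Sh"
    using assms(3) unfolding schur_cover_def by auto
  have grpSh: "group Sh" and grpS: "group S" and hom: "\<pi> \<in> hom Sh S"
    and surj: "\<pi> ` carrier Sh = carrier S" and kerc: "kernel Sh S \<pi> \<subseteq> group_center Sh"
    using ce unfolding central_extension_def by auto
  interpret Sh: group Sh by (rule grpSh)
  interpret S: group S by (rule grpS)
  interpret gh: group_hom Sh S \<pi> using hom grpSh grpS by (simp add: group_hom_def group_hom_axioms_def)
  have irr: "is_irr_rep Sh n \<rho>" by (rule assms(4))
  have rep: "is_rep Sh n \<rho>" and n0: "n > 0" using irr unfolding is_irr_rep_def by auto
  have rg: "\<rho> h \<in> carrier_mat n n" if "h \<in> carrier Sh" for h using rep that unfolding is_rep_def by auto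
  have rmul: "\<rho> (a \<otimes>\<^bsub>Sh\<^esub> b) = \<rho> a * \<rho> b" if "a \<in> carrier Sh" "b \<in> carrier Sh" for a b
    using rep that unfolding is_rep_def by auto
  have r1: "\<rho> \<one>\<^bsub>Sh\<^esub> = 1\<^sub>m n" using rep unfolding is_rep_def by auto
  have rinvl: "\<rho> (inv\<^bsub>Sh\<^esub> a) * \<rho> a = 1\<^sub>m n" if "a \<in> carrier Sh" for a
    using rmul[of "inv\<^bsub>Sh\<^esub> a" a] that r1 by simp
  have rinvr: "\<rho> a * \<rho> (inv\<^bsub>Sh\<^esub> a) = 1\<^sub>m n" if "a \<in> carrier Sh" for a
    using rmul[of a "inv\<^bsub>Sh\<^esub> a"] that r1 by simp
  have n2: "n \<ge> 2"
  proof (rule ccontr)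
    assume "\<not> n \<ge> 2"
    then have n1: "n = 1" using n0 by auto
    have "\<rho> h = 1\<^sub>m 1" if "h \<in> carrier Sh" for h
      using deg1_trivial[OF grpSh perf] rep n1 that by auto
    then have "principal_character Sh n \<rho>"
      unfolding principal_character_def rep_character_def n1 by auto
    then show False using assms(5) by contradiction
  qed
  define N where "N = n * n"
  define \<Phi> where "\<Phi> h = KK n (\<rho> h) (\<rho> (inv\<^bsub>Sh\<^esub> h))" for h
  have \<Phi>C: "\<Phi> h \<in> carrier_mat N N" for h unfolding \<Phi>_def N_def by simp
  have \<Phi>act: "\<Phi> h *\<^sub>v v = mv n (\<rho> h * vm n v * \<rho> (inv\<^bsub>Sh\<^esub> h))"
    if "h \<in> carrier Sh" "v \<in> carrier_vec N" for h v
    unfolding \<Phi>_def using KK_act[OF rg[OF that(1)] rg[OF Sh.inv_closed[OF that(1)]]] that N_def by auto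
  note assoc_n[simp] = assoc_mult_mat[of _ n n _ n _ n] mult_carrier_mat[of _ n n _ n]
  have \<Phi>mul: "\<Phi> (a \<otimes>\<^bsub>Sh\<^esub> b) = \<Phi> a * \<Phi> b" if a: "a \<in> carrier Sh" and b: "b \<in> carrier Sh" for a b
  proof (rule mat_eq_by_vec[OF \<Phi>C])
    show "\<Phi> a * \<Phi> b \<in> carrier_mat N N" using \<Phi>C[of a] \<Phi>C[of b] by auto
    fix v :: "complex vec" assume v: "v \<in> carrier_vec N"
    have ia: "inv\<^bsub>Sh\<^esub> a \<in> carrier Sh" and ib: "inv\<^bsub>Sh\<^esub> b \<in> carrier Sh" using a b by auto
    have Y: "vm n v \<in> carrier_mat n n" by simp
    have "\<Phi> (a \<otimes>\<^bsub>Sh\<^esub> b) *\<^sub>v v = mv n (\<rho> (a \<otimes>\<^bsub>Sh\<^esub> b) * vm n v * \<rho> (inv\<^bsub>Sh\<^esub> (a \<otimes>\<^bsub>Sh\<^esub> b)))"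
      using \<Phi>act[OF _ v] a b by auto
    also have "\<rho> (inv\<^bsub>Sh\<^esub> (a \<otimes>\<^bsub>Sh\<^esub> b)) = \<rho> (inv\<^bsub>Sh\<^esub> b) * \<rho> (inv\<^bsub>Sh\<^esub> a)"
      using a b ia ib rmul by (simp add: Sh.inv_mult_group)
    also have "\<rho> (a \<otimes>\<^bsub>Sh\<^esub> b) = \<rho> a * \<rho> b" using rmul a b by simp
    also have "mv n (\<rho> a * \<rho> b * vm n v * (\<rho> (inv\<^bsub>Sh\<^esub> b) * \<rho> (inv\<^bsub>Sh\<^esub> a)))
        = mv n (\<rho> a * (\<rho> b * vm n v * \<rho> (inv\<^bsub>Sh\<^esub> b)) * \<rho> (inv\<^bsub>Sh\<^esub> a))"
      using rg[OF a] rg[OF b] rg[OF ia] rg[OF ib] Y by simp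
    also have "\<dots> = \<Phi> a *\<^sub>v (\<Phi> b *\<^sub>v v)"
      using \<Phi>act[OF a] \<Phi>act[OF b v] vm_mv rg[OF b] rg[OF ib] Y N_def by simp
    also have "\<dots> = (\<Phi> a * \<Phi> b) *\<^sub>v v" using \<Phi>C[of a] \<Phi>C[of b] v by simp
    finally show "\<Phi> (a \<otimes>\<^bsub>Sh\<^esub> b) *\<^sub>v v = (\<Phi> a * \<Phi> b) *\<^sub>v v" .
  qed
  have \<Phi>1: "\<Phi> \<one>\<^bsub>Sh\<^esub> = 1\<^sub>m N"
  proof (rule mat_eq_by_vec[OF \<Phi>C])
    show "1\<^sub>m N \<in> carrier_mat N N" by simp
    fix v :: "complex vec" assume v: "v \<in> carrier_vec N"
    show "\<Phi> \<one>\<^bsub>Sh\<^esub> *\<^sub>v v = 1\<^sub>m N *\<^sub>v v"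
      using \<Phi>act[OF Sh.one_closed v] r1 v mv_vm N_def by simp
  qed
  have \<Phi>ker: "\<Phi> z = 1\<^sub>m N" if z: "z \<in> kernel Sh S \<pi>" for z
  proof -
    have zc: "z \<in> carrier Sh" and zcent: "\<forall>g\<in>carrier Sh. z \<otimes>\<^bsub>Sh\<^esub> g = g \<otimes>\<^bsub>Sh\<^esub> z"
      using z kerc unfolding group_center_def by auto
    have "\<exists>c. \<rho> z = c \<cdot>\<^sub>m 1\<^sub>m n"
    proof (rule schur_scalar[OF irr rg[OF zc]])
      fix g assume g: "g \<in> carrier Sh"
      have "\<rho> z * \<rho> g = \<rho> (z \<otimes>\<^bsub>Sh\<^esub> g)" using rmul[OF zc g] by simp
      also have "\<dots> = \<rho> (g \<otimes>\<^bsub>Sh\<^esub> z)" using zcent g by simp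
      also have "\<dots> = \<rho> g * \<rho> z" using rmul[OF g zc] by simp
      finally show "\<rho> z * \<rho> g = \<rho> g * \<rho> z" .
    qed
    then obtain c where c: "\<rho> z = c \<cdot>\<^sub>m 1\<^sub>m n" by blast
    show ?thesis
    proof (rule mat_eq_by_vec[OF \<Phi>C])
      show "1\<^sub>m N \<in> carrier_mat N N" by simp
      fix v :: "complex vec" assume v: "v \<in> carrier_vec N"
      have Y: "vm n v \<in> carrier_mat n n" by simp
      have iz: "inv\<^bsub>Sh\<^esub> z \<in> carrier Sh" using zc by auto
      have "\<rho> z * vm n v = vm n v * \<rho> z" unfolding c
        using mult_smult_assoc_mat[OF one_carrier_mat Y, of c] mult_smult_distrib[OF Y one_carrier_mat, of c] Y
        by simp
      then have "\<rho> z * vm n v * \<rho> (inv\<^bsub>Sh\<^esub> z) = vm n v * (\<rho> z * \<rho> (inv\<^bsub>Sh\<^esub> z))"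
        using rg[OF zc] rg[OF iz] Y by simp
      also have "\<dots> = vm n v" using rinvr[OF zc] Y by simp
      finally show "\<Phi> z *\<^sub>v v = 1\<^sub>m N *\<^sub>v v"
        using \<Phi>act[OF zc v] v mv_vm N_def by simp
    qed
  qed
  have \<Phi>wd: "\<Phi> a = \<Phi> b" if a: "a \<in> carrier Sh" and b: "b \<in> carrier Sh" and ab: "\<pi> a = \<pi> b" for a b
  proof -
    define z where "z = inv\<^bsub>Sh\<^esub> a \<otimes>\<^bsub>Sh\<^esub> b"
    have zc: "z \<in> carrier Sh" using a b z_def by auto
    have "\<pi> z = \<one>\<^bsub>S\<^esub>" unfolding z_def using a b ab by (simp add: gh.hom_inv)
    then have "z \<in> kernel Sh S \<pi>" using zc unfolding kernel_def by auto
    then have "\<Phi> z = 1\<^sub>m N" by (rule \<Phi>ker)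
    moreover have "b = a \<otimes>\<^bsub>Sh\<^esub> z"
    proof -
      have "a \<otimes>\<^bsub>Sh\<^esub> z = (a \<otimes>\<^bsub>Sh\<^esub> inv\<^bsub>Sh\<^esub> a) \<otimes>\<^bsub>Sh\<^esub> b"
        unfolding z_def using Sh.m_assoc[of a "inv\<^bsub>Sh\<^esub> a" b] a b by simp
      then show ?thesis using a b by simp
    qed
    ultimately show ?thesis using \<Phi>mul[OF a zc] \<Phi>C[of a] by simp
  qed
  define pre where "pre s = (SOME h. h \<in> carrier Sh \<and> \<pi> h = s)" for s
  have pre: "pre s \<in> carrier Sh \<and> \<pi> (pre s) = s" if "s \<in> carrier S" for s
  proof -
    have "s \<in> \<pi> ` carrier Sh" using surj that by simp
    then have "\<exists>h. h \<in> carrier Sh \<and> \<pi> h = s" by (metis imageE)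
    then show ?thesis unfolding pre_def by (rule someI_ex)
  qed
  define \<sigma> where "\<sigma> s = \<Phi> (pre s)" for s
  have \<sigma>\<pi>: "\<sigma> (\<pi> h) = \<Phi> h" if "h \<in> carrier Sh" for h
  proof -
    have hc: "\<pi> h \<in> carrier S" using that by simp
    have "\<Phi> (pre (\<pi> h)) = \<Phi> h" by (rule \<Phi>wd) (use pre[OF hc] that in auto)
    then show ?thesis unfolding \<sigma>_def .
  qed
  have rep\<sigma>: "is_rep S N \<sigma>"
    unfolding is_rep_def
  proof (intro conjI ballI)
    show "\<sigma> g \<in> carrier_mat N N" for g unfolding \<sigma>_def by (rule \<Phi>C)
    fix s t assume s: "s \<in> carrier S" and t: "t \<in> carrier S"
    obtain a b where a: "a \<in> carrier Sh" "\<pi> a = s" and b: "b \<in> carrier Sh" "\<pi> b = t"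
      using pre[OF s] pre[OF t] by metis
    have "s \<otimes>\<^bsub>S\<^esub> t = \<pi> (a \<otimes>\<^bsub>Sh\<^esub> b)" using a b by simp
    then have "\<sigma> (s \<otimes>\<^bsub>S\<^esub> t) = \<Phi> (a \<otimes>\<^bsub>Sh\<^esub> b)" using \<sigma>\<pi>[of "a \<otimes>\<^bsub>Sh\<^esub> b"] a b by simp
    also have "\<dots> = \<Phi> a * \<Phi> b" using \<Phi>mul a b by simp
    also have "\<dots> = \<sigma> s * \<sigma> t" using \<sigma>\<pi>[of a] \<sigma>\<pi>[of b] a b by simp
    finally show "\<sigma> (s \<otimes>\<^bsub>S\<^esub> t) = \<sigma> s * \<sigma> t" .
  next
    have "\<sigma> (\<pi> \<one>\<^bsub>Sh\<^esub>) = 1\<^sub>m N" using \<sigma>\<pi>[OF Sh.one_closed] \<Phi>1 by simp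
    then show "\<sigma> \<one>\<^bsub>S\<^esub> = 1\<^sub>m N" by simp
  qed
  have \<sigma>fix: "\<Phi> h *\<^sub>v w = w" if h: "h \<in> carrier Sh" and fx: "\<forall>g\<in>carrier S. \<sigma> g *\<^sub>v w = w" for h w
  proof -
    have "\<pi> h \<in> carrier S" using h by simp
    then show ?thesis using fx \<sigma>\<pi>[OF h] by auto
  qed
  define W0 :: "complex vec set" where "W0 = {v \<in> carrier_vec N. (\<Sum>i<n. v $ (i*n+i)) = 0}"
  have idxN: "i*n+i < N" if "i < n" for i using idx_lt[OF that that] N_def by simp
  have inv0: "invariant_subspace S N \<sigma> W0"
    unfolding invariant_subspace_def
  proof (intro conjI ballI allI)
    show "W0 \<subseteq> carrier_vec N" unfolding W0_def by auto
    show "0\<^sub>v N \<in> W0" unfolding W0_def using idxN by (auto intro!: sum.neutral)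
  next
    fix v w assume v: "v \<in> W0" and w: "w \<in> W0"
    have "(\<Sum>i<n. (v + w) $ (i*n+i)) = (\<Sum>i<n. v $ (i*n+i)) + (\<Sum>i<n. w $ (i*n+i))"
      using v w idxN unfolding W0_def by (auto simp: sum.distrib intro!: sum.cong)
    then show "v + w \<in> W0" using v w unfolding W0_def by auto
  next
    fix c v assume v: "v \<in> W0"
    have "(\<Sum>i<n. (c \<cdot>\<^sub>v v) $ (i*n+i)) = (\<Sum>i<n. c * v $ (i*n+i))"
      using v idxN unfolding W0_def by (auto intro!: sum.cong)
    also have "\<dots> = c * (\<Sum>i<n. v $ (i*n+i))" by (simp add: sum_distrib_left)
    finally show "c \<cdot>\<^sub>v v \<in> W0" using v unfolding W0_def by auto
  next
    fix s v assume s: "s \<in> carrier S" and v: "v \<in> W0"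
    have vC: "v \<in> carrier_vec N" using v unfolding W0_def by auto
    define h where "h = pre s"
    have h: "h \<in> carrier Sh" using pre[OF s] h_def by auto
    have ih: "inv\<^bsub>Sh\<^esub> h \<in> carrier Sh" using h by simp
    have Y: "vm n v \<in> carrier_mat n n" by simp
    have \<sigma>s: "\<sigma> s = \<Phi> h" unfolding \<sigma>_def h_def ..
    have "(\<Sum>i<n. (\<sigma> s *\<^sub>v v) $ (i*n+i)) = tr n (\<rho> h * vm n v * \<rho> (inv\<^bsub>Sh\<^esub> h))"
      unfolding \<sigma>s using \<Phi>act[OF h vC] tr_mv rg[OF h] rg[OF ih] Y by simp
    also have "\<dots> = tr n (\<rho> (inv\<^bsub>Sh\<^esub> h) * (\<rho> h * vm n v))"
      by (rule tr_comm) (use rg[OF h] rg[OF ih] Y in auto)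
    also have "\<rho> (inv\<^bsub>Sh\<^esub> h) * (\<rho> h * vm n v) = vm n v"
      using rinvl[OF h] rg[OF h] rg[OF ih] Y assoc_mult_mat[of "\<rho> (inv\<^bsub>Sh\<^esub> h)" n n "\<rho> h" n "vm n v" n, symmetric]
      by simp
    also have "tr n (vm n v) = 0" using v unfolding W0_def tr_vm by simp
    finally have "(\<Sum>i<n. (\<sigma> s *\<^sub>v v) $ (i*n+i)) = 0" .
    moreover have "\<sigma> s *\<^sub>v v \<in> carrier_vec N" unfolding \<sigma>s using mult_mat_vec_carrier[OF \<Phi>C[of h] vC] .
    ultimately show "\<sigma> s *\<^sub>v v \<in> W0" unfolding W0_def by auto
  qed
  have N4: "N \<ge> 4" unfolding N_def using n2 mult_le_mono[OF n2 n2] by simp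
  have ne0: "W0 \<noteq> {0\<^sub>v N}"
  proof -
    have ne: "i*n+i \<noteq> 1" if "i < n" for i
    proof (cases i)
      case (Suc j) then have "i*n+i \<ge> n + 1" by simp
      then show ?thesis using n2 by simp
    qed simp
    have "unit_vec N 1 \<in> W0" unfolding W0_def using idxN ne N4
      by (auto intro!: sum.neutral)
    moreover have "(unit_vec N 1 :: complex vec) \<noteq> 0\<^sub>v N"
    proof
      assume eq: "(unit_vec N 1 :: complex vec) = 0\<^sub>v N"
      have "(1::complex) = unit_vec N 1 $ 1" using N4 by simp
      also have "\<dots> = (0\<^sub>v N :: complex vec) $ 1" by (simp only: eq)
      also have "\<dots> = 0" using N4 by simp
      finally show False by simp
    qed
    ultimately show ?thesis by auto
  qed
  have neall: "W0 \<noteq> carrier_vec N"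
  proof
    assume eq: "W0 = carrier_vec N"
    have "unit_vec N 0 \<in> W0" unfolding eq by simp
    moreover have "(\<Sum>i<n. (unit_vec N 0 :: complex vec) $ (i*n+i)) = (\<Sum>i<n. if i = 0 then 1 else 0)"
    proof (intro sum.cong refl)
      fix i assume "i \<in> {..<n}"
      then have "i*n+i < N" using idxN by simp
      moreover have "i*n+i = 0 \<longleftrightarrow> i = 0" using n0 by simp
      ultimately show "(unit_vec N 0 :: complex vec) $ (i*n+i) = (if i = 0 then 1 else 0)" by simp
    qed
    moreover have "(\<Sum>i<n. (if i = 0 then 1 else 0) :: complex) = 1" using n0 by (simp add: sum.delta)
    ultimately show False unfolding W0_def by simp
  qed
  obtain k \<tau> B where k0: "0 < k" and kN: "k < N" and rep\<tau>: "is_rep S k \<tau>" and B: "B \<in> carrier_mat N k"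
    and BW: "\<forall>v\<in>carrier_vec k. B *\<^sub>v v \<in> W0 \<and> (B *\<^sub>v v = 0\<^sub>v N \<longrightarrow> v = 0\<^sub>v k)"
    and inter: "\<forall>g\<in>carrier S. \<sigma> g * B = B * \<tau> g"
    using restrict_rep[OF rep\<sigma> inv0 ne0 neall] by blast
  define NF where "NF k' \<tau>' \<longleftrightarrow> (\<forall>v\<in>carrier_vec k'. (\<forall>g\<in>carrier S. \<tau>' g *\<^sub>v v = v) \<longrightarrow> v = 0\<^sub>v k')"
    for k' and \<tau>' :: "'a \<Rightarrow> complex mat"
  have NF\<tau>: "NF k \<tau>" unfolding NF_def
  proof (intro ballI impI)
    fix v assume v: "v \<in> carrier_vec k" and fx: "\<forall>g\<in>carrier S. \<tau> g *\<^sub>v v = v"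
    define w where "w = B *\<^sub>v v"
    have wC: "w \<in> carrier_vec N" using B v w_def by simp
    have wW: "w \<in> W0" using BW v w_def by auto
    have \<tau>C: "\<tau> g \<in> carrier_mat k k" if "g \<in> carrier S" for g using rep\<tau> that unfolding is_rep_def by auto
    have wfix: "\<forall>g\<in>carrier S. \<sigma> g *\<^sub>v w = w"
    proof
      fix g assume g: "g \<in> carrier S"
      have "\<sigma> g *\<^sub>v w = (\<sigma> g * B) *\<^sub>v v" unfolding w_def \<sigma>_def
        using assoc_mult_mat_vec[OF \<Phi>C[of "pre g"] B v] by simp
      also have "\<dots> = (B * \<tau> g) *\<^sub>v v" using inter g by simp
      also have "\<dots> = B *\<^sub>v (\<tau> g *\<^sub>v v)" using B \<tau>C[OF g] v by simp
      also have "\<dots> = w" using fx g w_def by simp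
      finally show "\<sigma> g *\<^sub>v w = w" .
    qed
    define Y where "Y = vm n w"
    have Y: "Y \<in> carrier_mat n n" unfolding Y_def by simp
    have conjY: "\<rho> h * Y * \<rho> (inv\<^bsub>Sh\<^esub> h) = Y" if h: "h \<in> carrier Sh" for h
    proof -
      have ih: "inv\<^bsub>Sh\<^esub> h \<in> carrier Sh" using h by simp
      have "mv n (\<rho> h * Y * \<rho> (inv\<^bsub>Sh\<^esub> h)) = w"
        using \<sigma>fix[OF h wfix] \<Phi>act[OF h wC] Y_def by simp
      then have "vm n (mv n (\<rho> h * Y * \<rho> (inv\<^bsub>Sh\<^esub> h))) = Y" using Y_def by simp
      then show ?thesis using vm_mv rg[OF h] rg[OF ih] Y by simp
    qed
    have "\<exists>c. Y = c \<cdot>\<^sub>m 1\<^sub>m n"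
    proof (rule schur_scalar[OF irr Y])
      fix g assume g: "g \<in> carrier Sh"
      have ig: "inv\<^bsub>Sh\<^esub> g \<in> carrier Sh" using g by simp
      have "Y * \<rho> g = (\<rho> g * Y * \<rho> (inv\<^bsub>Sh\<^esub> g)) * \<rho> g" using conjY[OF g] by simp
      also have "\<dots> = \<rho> g * Y * (\<rho> (inv\<^bsub>Sh\<^esub> g) * \<rho> g)"
        using rg[OF g] rg[OF ig] Y by simp
      also have "\<dots> = \<rho> g * Y" using rinvl[OF g] rg[OF g] Y by simp
      finally show "Y * \<rho> g = \<rho> g * Y" .
    qed
    then obtain c where c: "Y = c \<cdot>\<^sub>m 1\<^sub>m n" by blast
    have "tr n Y = c * of_nat n" unfolding c tr_def by simp
    moreover have "tr n Y = 0" using wW unfolding W0_def Y_def tr_vm by simp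
    ultimately have "c = 0" using n0 by simp
    then have "Y = 0\<^sub>m n n" unfolding c by (auto intro!: eq_matI)
    then have "w = mv n (0\<^sub>m n n)" using mv_vm[of w n] wC N_def Y_def by simp
    also have "\<dots> = 0\<^sub>v N" unfolding mv_def N_def by (auto intro!: eq_vecI simp: divmod_lt)
    finally show "v = 0\<^sub>v k" using BW v w_def by auto
  qed
  define P where "P k' \<longleftrightarrow> (\<exists>\<tau>'. is_rep S k' \<tau>' \<and> 0 < k' \<and> k' \<le> n^2 - 1 \<and> NF k' \<tau>')" for k'
  have "P k" unfolding P_def using rep\<tau> k0 kN NF\<tau> N_def by (auto simp: power2_eq_square)
  define k0 where "k0 = (LEAST k'. P k')"
  have "P k0" unfolding k0_def by (rule LeastI) fact
  then obtain \<tau>0 where rep0: "is_rep S k0 \<tau>0" and k00: "0 < k0" and k0n: "k0 \<le> n^2 - 1"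
    and NF0: "NF k0 \<tau>0" unfolding P_def by blast
  have \<tau>0C: "\<tau>0 g \<in> carrier_mat k0 k0" if "g \<in> carrier S" for g using rep0 that unfolding is_rep_def by auto
  have irr0: "is_irr_rep S k0 \<tau>0"
    unfolding is_irr_rep_def
  proof (intro conjI allI impI rep0 k00)
    fix W assume W: "invariant_subspace S k0 \<tau>0 W"
    show "W = {0\<^sub>v k0} \<or> W = carrier_vec k0"
    proof (rule ccontr)
      assume "\<not> (W = {0\<^sub>v k0} \<or> W = carrier_vec k0)"
      then obtain k' \<tau>' B' where k'0: "0 < k'" and k'k: "k' < k0" and rep': "is_rep S k' \<tau>'"
        and B': "B' \<in> carrier_mat k0 k'"
        and BW': "\<forall>v\<in>carrier_vec k'. B' *\<^sub>v v \<in> W \<and> (B' *\<^sub>v v = 0\<^sub>v k0 \<longrightarrow> v = 0\<^sub>v k')"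
        and inter': "\<forall>g\<in>carrier S. \<tau>0 g * B' = B' * \<tau>' g"
        using restrict_rep[OF rep0 W] by blast
      have \<tau>'C: "\<tau>' g \<in> carrier_mat k' k'" if "g \<in> carrier S" for g using rep' that unfolding is_rep_def by auto
      have "NF k' \<tau>'" unfolding NF_def
      proof (intro ballI impI)
        fix v assume v: "v \<in> carrier_vec k'" and fx: "\<forall>g\<in>carrier S. \<tau>' g *\<^sub>v v = v"
        have "\<forall>g\<in>carrier S. \<tau>0 g *\<^sub>v (B' *\<^sub>v v) = B' *\<^sub>v v"
        proof
          fix g assume g: "g \<in> carrier S"
          have "\<tau>0 g *\<^sub>v (B' *\<^sub>v v) = (\<tau>0 g * B') *\<^sub>v v" using B' v \<tau>0C[OF g] by simp
          also have "\<dots> = (B' * \<tau>' g) *\<^sub>v v" using inter' g by simp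
          also have "\<dots> = B' *\<^sub>v (\<tau>' g *\<^sub>v v)" using B' \<tau>'C[OF g] v by simp
          also have "\<dots> = B' *\<^sub>v v" using fx g by simp
          finally show "\<tau>0 g *\<^sub>v (B' *\<^sub>v v) = B' *\<^sub>v v" .
        qed
        moreover have "B' *\<^sub>v v \<in> carrier_vec k0" using B' v by simp
        ultimately have "B' *\<^sub>v v = 0\<^sub>v k0" using NF0 unfolding NF_def by blast
        then show "v = 0\<^sub>v k'" using BW' v by blast
      qed
      then have "P k'" unfolding P_def using rep' k'0 k'k k0n by auto
      then have "k0 \<le> k'" unfolding k0_def by (rule Least_le)
      then show False using k'k by simp
    qed
  qed
  have np0: "\<not> principal_character S k0 \<tau>0"
  proof
    assume pc: "principal_character S k0 \<tau>0"
    have "rep_character k0 \<tau>0 \<one>\<^bsub>S\<^esub> = 1" using pc unfolding principal_character_def by simp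
    moreover have "rep_character k0 \<tau>0 \<one>\<^bsub>S\<^esub> = of_nat k0"
      using rep0 unfolding is_rep_def rep_character_def by simp
    ultimately have k01: "k0 = 1" by simp
    define e :: "complex vec" where "e = unit_vec 1 0"
    have "\<forall>g\<in>carrier S. \<tau>0 g *\<^sub>v e = e"
    proof
      fix g assume g: "g \<in> carrier S"
      have "rep_character k0 \<tau>0 g = 1" using pc g unfolding principal_character_def by simp
      then have t00: "\<tau>0 g $$ (0,0) = 1" unfolding rep_character_def k01 by simp
      show "\<tau>0 g *\<^sub>v e = e"
        using \<tau>0C[OF g] t00 k01 unfolding e_def
        by (auto intro!: eq_vecI simp: scalar_prod_def)
    qed
    moreover have "e \<in> carrier_vec k0" unfolding e_def k01 by simp
    ultimately have "e = 0\<^sub>v k0" using NF0 unfolding NF_def by blast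
    then have "e $ 0 = (0\<^sub>v k0 :: complex vec) $ 0" by simp
    then show False unfolding e_def using k01 by simp
  qed
  show ?thesis using irr0 np0 k0n by blast
qed

end
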